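(* For all integers $d\ge1$ and $p\ge0$, $$\|\partial_{x_i}v\|_{L^2(Q_d)}\le C_{p,1}\|v\|_{L^2(Q_d)}\qquad\forall v\in\mathbb{P}_p(Q_d),\ \forall i\in\{1,\dots,d\},$$ where $Q_d:=[0,1]^d$ is the unit hypercube and $\mathbb{P}_p(Q_d)$ the polynomials of total degree at most $p$.
   Context: $C_{p,1}$ denotes the best constant in the univariate inverse inequality $\|v'\|_{L^2(0,1)}\le C_{p,1}\|v\|_{L^2(0,1)}$ for all polynomials $v$ of degree at most $p$ on $(0,1)$. *)

theory Defs
  imports "HOL-Analysis.Analysis" "HOL-Computational_Algebra.Polynomial"
begin

definition L2_01 :: "real poly \<Rightarrow> real" where
  "L2_01 q = sqrt (integral {0..1} (\<lambda>x. (poly q x)^2))"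

definition C_p1 :: "nat \<Rightarrow> real" where
  "C_p1 p = Inf {C. \<forall>q::real poly. degree q \<le> p \<longrightarrow> L2_01 (pderiv q) \<le> C * L2_01 q}"

definition multi_idx :: "nat \<Rightarrow> ('n::finite \<Rightarrow> nat) set" where
  "multi_idx p = {\<alpha>. (\<Sum>j\<in>UNIV. \<alpha> j) \<le> p}"

text \<open>P_p(Q_d): real polynomial functions of total degree at most p on R^d (d = CARD('n)).\<close>
definition Poly_tot :: "nat \<Rightarrow> (real^'n::finite \<Rightarrow> real) set" where
  "Poly_tot p = {v. \<exists>c :: ('n \<Rightarrow> nat) \<Rightarrow> real.
      v = (\<lambda>x. \<Sum>\<alpha>\<in>multi_idx p. c \<alpha> * (\<Prod>j\<in>UNIV. (x $ j) ^ (\<alpha> j)))}"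

definition partial :: "'n::finite \<Rightarrow> (real^'n \<Rightarrow> real) \<Rightarrow> real^'n \<Rightarrow> real" where
  "partial i v x = deriv (\<lambda>t. v (x + t *\<^sub>R axis i 1)) 0"

definition L2_Q :: "(real^'n::finite \<Rightarrow> real) \<Rightarrow> real" where
  "L2_Q v = sqrt (integral (cbox 0 1) (\<lambda>x. (v x)^2))"

end

theory Submission
  imports Defs
begin

definition QF :: "nat \<Rightarrow> (nat \<Rightarrow> real \<Rightarrow> real) \<Rightarrow> (nat \<Rightarrow> real) \<Rightarrow> real" where
 "QF p \<phi> a = integral {0..1} (\<lambda>x. (\<Sum>k\<le>p. a k * \<phi> k x)^2)"

lemma QF_expand:
  assumes "\<And>k. continuous_on {0..1} (\<phi> k)"
  shows "QF p \<phi> a = (\<Sum>j\<le>p. \<Sum>k\<le>p. a j * a k * integral {0..1} (\<lambda>x. \<phi> j x * \<phi> k x))"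
proof -
  have e: "(\<lambda>x. (\<Sum>k\<le>p. a k * \<phi> k x)^2) = (\<lambda>x. \<Sum>j\<le>p. \<Sum>k\<le>p. a j * a k * (\<phi> j x * \<phi> k x))"
    by (auto simp: power2_eq_square sum_product algebra_simps)
  have int: "\<And>j k. (\<lambda>x. \<phi> j x * \<phi> k x) integrable_on {0..1}"
    by (intro integrable_continuous_interval continuous_intros assms)
  have h: "((\<lambda>x. a j * a k * (\<phi> j x * \<phi> k x)) has_integral (a j * a k * integral {0..1} (\<lambda>x. \<phi> j x * \<phi> k x))) {0..1}" for j k
    using has_integral_mult_right[OF integrable_integral[OF int]] by blast
  have "((\<lambda>x. \<Sum>j\<le>p. \<Sum>k\<le>p. a j * a k * (\<phi> j x * \<phi> k x)) has_integral (\<Sum>j\<le>p. \<Sum>k\<le>p. a j * a k * integral {0..1} (\<lambda>x. \<phi> j x * \<phi> k x))) {0..1}"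
    by (intro has_integral_sum h) auto
  then show ?thesis unfolding QF_def e by (rule integral_unique)
qed

lemma cont_coord: "continuous_on S (\<lambda>a::nat\<Rightarrow>real. a j)"
  using continuous_on_product_then_coordinatewise[OF continuous_on_id, of S j] by (simp add: id_def)

lemma QF_cont:
  assumes "\<And>k. continuous_on {0..1} (\<phi> k)"
  shows "continuous_on S (QF p \<phi>)"
  unfolding QF_expand[OF assms, abs_def]
  by (intro continuous_intros cont_coord)

lemma QF_hom:
  assumes "\<And>k. continuous_on {0..1} (\<phi> k)"
  shows "QF p \<phi> (\<lambda>k. r * a k) = r^2 * QF p \<phi> a"
  unfolding QF_expand[OF assms]
  by (simp add: sum_distrib_left algebra_simps power2_eq_square)



lemma QF_nonneg: "QF p \<phi> a \<ge> 0"
  unfolding QF_def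
  by (cases "(\<lambda>x. (\<Sum>k\<le>p. a k * \<phi> k x)^2) integrable_on {0..1}")
     (auto intro: integral_nonneg simp: not_integrable_integral)

lemma QF_pos:
  assumes "k0 \<le> p" "a k0 \<noteq> 0"
  shows "QF p (\<lambda>k x. x^k) a > 0"
proof (rule ccontr)
  assume "\<not> QF p (\<lambda>k x. x^k) a > 0"
  then have z: "QF p (\<lambda>k x. x^k) a = 0" using QF_nonneg[of p "\<lambda>k x. x^k" a] by linarith
  define q where "q = (\<Sum>k\<le>p. monom (a k) k)"
  have pq: "poly q x = (\<Sum>k\<le>p. a k * x^k)" for x
    unfolding q_def by (simp add: poly_sum poly_monom)
  have "coeff q k0 = a k0"
    unfolding q_def using assms(1) by (simp add: coeff_sum coeff_monom)
  then have "q \<noteq> 0" using assms(2) by auto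
  then have fin: "finite {x. poly q x = 0}" by (rule poly_roots_finite)
  have "continuous_on {0..1} (\<lambda>x::real. (\<Sum>k\<le>p. a k * x^k)^2)"
    by (intro continuous_intros)
  then have "\<forall>x\<in>{0..1::real}. (\<Sum>k\<le>p. a k * x^k)^2 = 0"
    using z unfolding QF_def by (subst (asm) integral_eq_0_iff) auto
  then have "{0..1::real} \<subseteq> {x. poly q x = 0}" by (auto simp: pq)
  with fin have "finite {0..1::real}" by (rule finite_subset[rotated])
  then show False using infinite_Icc[of "0::real" 1] by simp
qed

lemma exists_const:
  fixes \<phi> \<psi> :: "nat \<Rightarrow> real \<Rightarrow> real"
  assumes c1: "\<And>k. continuous_on {0..1} (\<phi> k)" and c2: "\<And>k. continuous_on {0..1} (\<psi> k)"
  assumes pos: "\<And>a k0. k0 \<le> p \<Longrightarrow> a k0 \<noteq> 0 \<Longrightarrow> QF p \<phi> a > 0"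
  shows "\<exists>C\<ge>0. \<forall>a. QF p \<psi> a \<le> C * QF p \<phi> a"
proof -
  define K where "K = PiE UNIV (\<lambda>_. {-1..1}) \<inter> {a::nat\<Rightarrow>real. (\<Sum>k\<le>p. (a k)^2) = 1}"
  have "compact (PiE UNIV (\<lambda>_::nat. {-1..1::real}))"
  proof -
    have "compactin (product_topology (\<lambda>_::nat. euclidean) UNIV) (PiE UNIV (\<lambda>_. {-1..1::real}))"
      by (subst compactin_PiE) (simp add: compactin_euclidean_iff)
    then show ?thesis by (simp only: euclidean_product_topology compactin_euclidean_iff)
  qed
  moreover have "closed {a::nat\<Rightarrow>real. (\<Sum>k\<le>p. (a k)^2) = 1}"
    by (intro closed_Collect_eq continuous_intros cont_coord)
  ultimately have cK: "compact K" unfolding K_def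
    by (rule compact_Int_closed)
  have "(\<Sum>k\<le>p. ((\<lambda>k. if k = 0 then 1 else 0::real) k)^2) = 1"
    by (subst sum.cong[OF refl, of _ _ "\<lambda>k. if k = 0 then 1 else 0"]) auto
  then have Kne: "(\<lambda>k. if k = 0 then 1 else 0::real) \<in> K" unfolding K_def by auto
  then have "K \<noteq> {}" by auto
  have contP: "continuous_on K (QF p \<phi>)" by (rule QF_cont) (rule c1)
  have contD: "continuous_on K (QF p \<psi>)" by (rule QF_cont) (rule c2)
  obtain u where uK: "u \<in> K" and umin: "\<forall>y\<in>K. QF p \<phi> u \<le> QF p \<phi> y"
    using continuous_attains_inf[OF cK \<open>K \<noteq> {}\<close> contP] by blast
  obtain w where wK: "w \<in> K" and wmax: "\<forall>y\<in>K. QF p \<psi> y \<le> QF p \<psi> w"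
    using continuous_attains_sup[OF cK \<open>K \<noteq> {}\<close> contD] by blast
  define m where "m = QF p \<phi> u"
  define M where "M = QF p \<psi> w"
  have "\<exists>k0\<le>p. u k0 \<noteq> 0"
  proof (rule ccontr)
    assume "\<not> ?thesis"
    then have "(\<Sum>k\<le>p. (u k)^2) = 0" by auto
    then show False using uK unfolding K_def by auto
  qed
  then have m0: "m > 0" unfolding m_def using pos by blast
  have M0: "M \<ge> 0" unfolding M_def by (rule QF_nonneg)
  show ?thesis
  proof (intro exI[of _ "M / m"] conjI allI)
    show "M / m \<ge> 0" using m0 M0 by simp
    fix a :: "nat \<Rightarrow> real"
    define s where "s = (\<Sum>k\<le>p. (a k)^2)"
    show "QF p \<psi> a \<le> M / m * QF p \<phi> a"
    proof (cases "s = 0")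
      case True
      then have "\<forall>k\<le>p. a k = 0" unfolding s_def
        by (subst (asm) sum_nonneg_eq_0_iff) auto
      then have "QF p \<psi> a = 0" by (simp add: QF_expand[OF c2])
      then show ?thesis using QF_nonneg[of p \<phi> a] m0 M0 by simp
    next
      case False
      have "s \<ge> 0" unfolding s_def by (intro sum_nonneg) auto
      then have s0: "s > 0" using False by linarith
      define r where "r = sqrt s"
      have r0: "r > 0" unfolding r_def using s0 by simp
      define b where "b = (\<lambda>k. if k \<le> p then a k / r else 0)"
      have ab: "QF p \<eta> a = QF p \<eta> (\<lambda>k. r * b k)" for \<eta>
        unfolding b_def QF_def using r0 by (intro arg_cong[where f="integral _"] ext sum.cong) auto
      have "(\<Sum>k\<le>p. (b k)^2) = (\<Sum>k\<le>p. (a k)^2 / r^2)"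
        unfolding b_def by (intro sum.cong) (auto simp: power_divide)
      also have "\<dots> = s / r^2" unfolding s_def by (rule sum_divide_distrib[symmetric])
      also have "r^2 = s" unfolding r_def using s0 by simp
      finally have sb: "(\<Sum>k\<le>p. (b k)^2) = 1" using s0 by simp
      have "b \<in> K"
      proof -
        have "(b k)^2 \<le> 1" for k
        proof (cases "k \<le> p")
          case True
          have "(b k)^2 \<le> (\<Sum>k\<le>p. (b k)^2)"
            by (rule member_le_sum) (use True in auto)
          then show ?thesis using sb by simp
        next
          case False
          then show ?thesis unfolding b_def by simp
        qed
        then have "b k \<in> {-1..1}" for k using abs_le_square_iff[of "b k" 1] by (simp add: abs_le_iff)
        then show ?thesis unfolding K_def using sb by auto
      qed
      have "QF p \<psi> a = r^2 * QF p \<psi> b" by (simp add: ab QF_hom[OF c2])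
      also have "\<dots> \<le> r^2 * M" using wmax \<open>b \<in> K\<close> unfolding M_def by (intro mult_left_mono) auto
      also have "\<dots> \<le> r^2 * (M / m * QF p \<phi> b)"
      proof -
        have "m \<le> QF p \<phi> b" using umin \<open>b \<in> K\<close> unfolding m_def by simp
        then have "M / m * m \<le> M / m * QF p \<phi> b" using m0 M0
          by (intro mult_left_mono) auto
        then have "M \<le> M / m * QF p \<phi> b" using m0 by simp
        then show ?thesis using r0 by (intro mult_left_mono) auto
      qed
      also have "\<dots> = M / m * QF p \<phi> a" by (simp add: ab QF_hom[OF c1])
      finally show ?thesis .
    qed
  qed
qed

lemma poly_sum_form:
  fixes q :: "real poly"
  assumes "degree q \<le> p"
  shows "poly q x = (\<Sum>k\<le>p. coeff q k * x^k)"
proof -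
  have "poly q x = (\<Sum>k\<le>degree q. coeff q k * x^k)" by (rule poly_altdef)
  also have "\<dots> = (\<Sum>k\<le>p. coeff q k * x^k)"
    using assms by (intro sum.mono_neutral_left) (auto simp: coeff_eq_0)
  finally show ?thesis .
qed

lemma pderiv_sum_form:
  fixes q :: "real poly"
  assumes "degree q \<le> p"
  shows "poly (pderiv q) x = (\<Sum>k\<le>p. coeff q k * (of_nat k * x^(k-1)))"
proof -
  have e: "poly q = (\<lambda>x. \<Sum>k\<le>p. coeff q k * x^k)"
    using poly_sum_form[OF assms] by auto
  have "((\<lambda>x. \<Sum>k\<le>p. coeff q k * x^k) has_real_derivative (\<Sum>k\<le>p. coeff q k * (of_nat k * x^(k-1)))) (at x)"
    by (intro DERIV_sum DERIV_cmult) (use DERIV_pow in simp)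
  moreover have "(poly q has_real_derivative poly (pderiv q) x) (at x)" by (rule poly_DERIV)
  ultimately show ?thesis unfolding e using DERIV_unique by blast
qed

lemma univ_const: "\<exists>C\<ge>0. \<forall>q::real poly. degree q \<le> p \<longrightarrow> L2_01 (pderiv q) \<le> C * L2_01 q"
proof -
  have c1: "continuous_on {0..1} ((\<lambda>k (x::real). x^k) k)" for k :: nat
    by (intro continuous_intros)
  have c2: "continuous_on {0..1} ((\<lambda>k (x::real). of_nat k * x^(k-1)) k)" for k :: nat
    by (intro continuous_intros)
  obtain C0 where C0: "C0 \<ge> 0" "\<forall>a. QF p (\<lambda>k x. of_nat k * x^(k-1)) a \<le> C0 * QF p (\<lambda>k x. x^k) a"
  proof -
    have "\<exists>C\<ge>0. \<forall>a. QF p (\<lambda>k x. of_nat k * x^(k-1)) a \<le> C * QF p (\<lambda>k x. x^k) a"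
    proof (rule exists_const)
      show "continuous_on {0..1} (\<lambda>x::real. x^k)" for k by (intro continuous_intros)
      show "continuous_on {0..1} (\<lambda>x::real. of_nat k * x^(k-1))" for k by (intro continuous_intros)
      show "QF p (\<lambda>k x. x ^ k) a > 0" if "k0 \<le> p" "a k0 \<noteq> 0" for a k0 using QF_pos that by blast
    qed
    then show ?thesis using that by blast
  qed
  show ?thesis
  proof (intro exI[of _ "sqrt C0"] conjI allI impI)
    show "sqrt C0 \<ge> 0" using C0 by simp
    fix q :: "real poly" assume dq: "degree q \<le> p"
    have "L2_01 (pderiv q) = sqrt (QF p (\<lambda>k x. of_nat k * x^(k-1)) (coeff q))"
      unfolding L2_01_def QF_def pderiv_sum_form[OF dq] by simp
    also have "\<dots> \<le> sqrt (C0 * QF p (\<lambda>k x. x^k) (coeff q))"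
      using C0 by simp
    also have "\<dots> = sqrt C0 * L2_01 q"
      unfolding L2_01_def QF_def poly_sum_form[OF dq] by (simp add: real_sqrt_mult)
    finally show "L2_01 (pderiv q) \<le> sqrt C0 * L2_01 q" .
  qed
qed

definition Sset :: "nat \<Rightarrow> real set" where
  "Sset p = {C. \<forall>q::real poly. degree q \<le> p \<longrightarrow> L2_01 (pderiv q) \<le> C * L2_01 q}"

lemma Sset_ge0: "C \<in> Sset p \<Longrightarrow> C \<ge> 0"
proof -
  assume "C \<in> Sset p"
  then have "\<forall>q::real poly. degree q \<le> p \<longrightarrow> L2_01 (pderiv q) \<le> C * L2_01 q" unfolding Sset_def by simp
  then have "L2_01 (pderiv 1) \<le> C * L2_01 1" by (drule_tac x=1 in spec) simp
  moreover have "L2_01 (pderiv 1) = 0" unfolding L2_01_def by simp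
  moreover have "L2_01 1 = 1" unfolding L2_01_def by simp
  ultimately show "C \<ge> 0" by simp
qed

lemma Sset_ne: "Sset p \<noteq> {}"
  using univ_const[of p] unfolding Sset_def by auto

lemma C_p1_eq: "C_p1 p = Inf (Sset p)"
  unfolding C_p1_def Sset_def ..

lemma C_p1_nonneg: "C_p1 p \<ge> 0"
  unfolding C_p1_eq by (rule cInf_greatest[OF Sset_ne Sset_ge0])

lemma L2_01_nonneg: "L2_01 q \<ge> 0"
  unfolding L2_01_def
  by (cases "(\<lambda>x. (poly q x)^2) integrable_on {0..1}")
     (auto intro: integral_nonneg simp: not_integrable_integral)

lemma C_p1_bound:
  fixes q :: "real poly"
  assumes "degree q \<le> p"
  shows "L2_01 (pderiv q) \<le> C_p1 p * L2_01 q"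
proof (cases "L2_01 q = 0")
  case True
  obtain C where "C \<in> Sset p" using Sset_ne by blast
  then have "L2_01 (pderiv q) \<le> C * L2_01 q" using assms unfolding Sset_def by auto
  then show ?thesis using True by simp
next
  case False
  then have pos: "L2_01 q > 0" using L2_01_nonneg[of q] by linarith
  have "L2_01 (pderiv q) / L2_01 q \<le> Inf (Sset p)"
  proof (rule cInf_greatest[OF Sset_ne])
    fix C assume "C \<in> Sset p"
    then have "L2_01 (pderiv q) \<le> C * L2_01 q" using assms unfolding Sset_def by auto
    then show "L2_01 (pderiv q) / L2_01 q \<le> C" using pos by (simp add: divide_le_eq)
  qed
  then show ?thesis using pos unfolding C_p1_eq by (simp add: divide_le_eq)
qed

definition upd :: "'n::finite \<Rightarrow> real^'n \<Rightarrow> real \<Rightarrow> real^'n" where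
  "upd i w y = w + (y - w$i) *\<^sub>R axis i 1"

lemma upd_nth: "upd i w y $ j = (if j = i then y else w $ j)"
  by (simp add: upd_def axis_def)

definition mpoly :: "nat \<Rightarrow> (('n::finite \<Rightarrow> nat) \<Rightarrow> real) \<Rightarrow> real^'n \<Rightarrow> real" where
  "mpoly p c x = (\<Sum>\<alpha>\<in>multi_idx p. c \<alpha> * (\<Prod>j\<in>UNIV. (x$j)^(\<alpha> j)))"

definition sl :: "nat \<Rightarrow> (('n::finite \<Rightarrow> nat) \<Rightarrow> real) \<Rightarrow> 'n \<Rightarrow> real^'n \<Rightarrow> real poly" where
  "sl p c i x = (\<Sum>\<alpha>\<in>multi_idx p. monom (c \<alpha> * (\<Prod>j\<in>UNIV-{i}. (x$j)^(\<alpha> j))) (\<alpha> i))"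

lemma alpha_le:
  assumes "\<alpha> \<in> multi_idx p" shows "\<alpha> j \<le> p"
proof -
  have "\<alpha> j \<le> (\<Sum>j\<in>UNIV. \<alpha> j)" by (rule member_le_sum) auto
  then show ?thesis using assms unfolding multi_idx_def by auto
qed

lemma finite_multi_idx: "finite (multi_idx p :: ('n::finite \<Rightarrow> nat) set)"
proof -
  have "multi_idx p \<subseteq> PiE UNIV (\<lambda>_::'n. {..p})"
    using alpha_le by (auto simp: PiE_def Pi_def)
  then show ?thesis by (rule finite_subset) (intro finite_PiE, auto)
qed

lemma sl_poly: "poly (sl p c i x) t = mpoly p c (upd i x t)"
  unfolding sl_def mpoly_def poly_sum poly_monom
proof (intro sum.cong refl)
  fix \<alpha> :: "'a \<Rightarrow> nat"
  have "(\<Prod>j\<in>UNIV. (upd i x t $ j)^(\<alpha> j)) = (upd i x t $ i)^(\<alpha> i) * (\<Prod>j\<in>UNIV-{i}. (upd i x t $ j)^(\<alpha> j))"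
    by (rule prod.remove) auto
  also have "(\<Prod>j\<in>UNIV-{i}. (upd i x t $ j)^(\<alpha> j)) = (\<Prod>j\<in>UNIV-{i}. (x $ j)^(\<alpha> j))"
    by (intro prod.cong) (auto simp: upd_nth)
  finally show "c \<alpha> * (\<Prod>j\<in>UNIV - {i}. x $ j ^ \<alpha> j) * t ^ \<alpha> i = c \<alpha> * (\<Prod>j\<in>UNIV. upd i x t $ j ^ \<alpha> j)"
    by (simp add: upd_nth)
qed

lemma sl_degree: "degree (sl p c i x) \<le> p"
  unfolding sl_def
  by (intro degree_sum_le finite_multi_idx) (meson alpha_le degree_monom_le le_trans)

lemma sl_upd: "sl p c i (upd i x t) = sl p c i x"
  unfolding sl_def by (intro sum.cong refl arg_cong2[where f=monom] arg_cong2[where f="(*)"] prod.cong) (auto simp: upd_nth)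

lemma shift_upd: "y + s *\<^sub>R axis i 1 = upd i y (y$i + s)"
  by (simp add: vec_eq_iff upd_nth axis_def)

lemma partial_mpoly: "partial i (mpoly p c) y = poly (pderiv (sl p c i y)) (y$i)"
proof -
  have e: "(\<lambda>s. mpoly p c (y + s *\<^sub>R axis i 1)) = (\<lambda>s. poly (sl p c i y) (y$i + s))"
    by (simp add: shift_upd sl_poly)
  have "((\<lambda>s. poly (sl p c i y) (y$i + s)) has_real_derivative poly (pderiv (sl p c i y)) (y$i + 0) * 1) (at 0)"
    by (rule DERIV_chain2[where f="poly (sl p c i y)"]) (rule poly_DERIV, intro derivative_eq_intros, auto)
  then show ?thesis unfolding partial_def e by (intro DERIV_imp_deriv) simp
qed

lemma pderiv_sl:
  "poly (pderiv (sl p c i y)) t = (\<Sum>\<alpha>\<in>multi_idx p. (c \<alpha> * (\<Prod>j\<in>UNIV-{i}. (y$j)^(\<alpha> j))) * (of_nat (\<alpha> i) * t^(\<alpha> i - 1)))"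
proof -
  have e: "poly (sl p c i y) = (\<lambda>t. \<Sum>\<alpha>\<in>multi_idx p. (c \<alpha> * (\<Prod>j\<in>UNIV-{i}. (y$j)^(\<alpha> j))) * t^(\<alpha> i))"
    unfolding sl_def by (simp add: poly_sum poly_monom fun_eq_iff)
  have "((\<lambda>t. \<Sum>\<alpha>\<in>multi_idx p. (c \<alpha> * (\<Prod>j\<in>UNIV-{i}. (y$j)^(\<alpha> j))) * t^(\<alpha> i)) has_real_derivative
      (\<Sum>\<alpha>\<in>multi_idx p. (c \<alpha> * (\<Prod>j\<in>UNIV-{i}. (y$j)^(\<alpha> j))) * (of_nat (\<alpha> i) * t^(\<alpha> i - 1)))) (at t)"
    by (intro DERIV_sum DERIV_cmult) (use DERIV_pow in simp)
  moreover have "(poly (sl p c i y) has_real_derivative poly (pderiv (sl p c i y)) t) (at t)" by (rule poly_DERIV)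
  ultimately show ?thesis unfolding e using DERIV_unique by blast
qed

lemma cont_nth: "continuous_on S (\<lambda>x::real^'n. x $ j)"
  by (intro continuous_on_component continuous_on_id)

lemma cont_mpoly: "continuous_on S (mpoly p c)"
  unfolding mpoly_def[abs_def] by (intro continuous_intros cont_nth)

lemma cont_partial: "continuous_on S (partial i (mpoly p c))"
  unfolding partial_mpoly[abs_def] pderiv_sl by (intro continuous_intros cont_nth)

lemma Phi_nth:
  fixes \<omega> :: "real^'n::finite \<Rightarrow> real"
  shows "(\<Sum>b\<in>Basis. \<omega> b *\<^sub>R b) $ j = \<omega> (axis j 1)"
proof -
  have "(\<Sum>b\<in>Basis. \<omega> b *\<^sub>R b) $ j = (\<Sum>b\<in>Basis. \<omega> b *\<^sub>R b) \<bullet> axis j 1"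
    by (rule cart_eq_inner_axis)
  also have "\<dots> = (\<Sum>b\<in>Basis. \<omega> b * (b \<bullet> axis j 1))"
    by (simp add: inner_sum_left)
  also have "\<dots> = (\<Sum>b\<in>Basis. if b = axis j 1 then \<omega> b else 0)"
    by (intro sum.cong refl) (auto simp: inner_Basis)
  also have "\<dots> = \<omega> (axis j 1)"
    by (simp add: sum.delta' Basis_real_def)
  finally show ?thesis .
qed

lemma Phi_upd:
  fixes \<omega> :: "real^'n::finite \<Rightarrow> real"
  shows "(\<Sum>b\<in>Basis. (fun_upd \<omega> (axis i 1) y) b *\<^sub>R b) = upd i (\<Sum>b\<in>Basis. \<omega> b *\<^sub>R b) y"
proof (rule iffD2[OF vec_eq_iff], rule allI)
  fix j
  show "(\<Sum>b\<in>Basis. (fun_upd \<omega> (axis i 1) y) b *\<^sub>R b) $ j = upd i (\<Sum>b\<in>Basis. \<omega> b *\<^sub>R b) y $ j"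
    unfolding Phi_nth upd_nth by (simp add: axis_eq_axis)
qed

lemma cont_upd: "continuous_on S (upd i w)"
  unfolding upd_def[abs_def] by (intro continuous_intros)

lemma fubini_ineq:
  fixes g h :: "real^'n::finite \<Rightarrow> real" and i :: 'n and K :: real
  assumes cg: "continuous_on UNIV g" and ch: "continuous_on UNIV h" and K: "K \<ge> 0"
  and slice: "\<And>x. integral {0..1} (\<lambda>t. (g (upd i x t))^2) \<le> K * integral {0..1} (\<lambda>t. (h (upd i x t))^2)"
  shows "integral (cbox 0 1) (\<lambda>x. (g x)^2) \<le> K * integral (cbox 0 1) (\<lambda>x. (h x)^2)"
proof -
  define cube where "cube = cbox (0::real^'n) 1"
  define F where "F = (\<lambda>(L::real) (f::real^'n\<Rightarrow>real) x. ennreal (L * (f x)^2) * indicator cube x)"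
  define \<Phi> where "\<Phi> = (\<lambda>\<omega>::(real^'n \<Rightarrow> real). \<Sum>b\<in>Basis. \<omega> b *\<^sub>R b)"
  define b0 where "b0 = (axis i 1 :: real^'n)"
  define I where "I = (Basis::(real^'n) set) - {b0}"
  have b0B: "b0 \<in> Basis" unfolding b0_def by (simp add: Basis_real_def)
  have bI: "insert b0 I = Basis" "b0 \<notin> I" "finite I" unfolding I_def using b0B by auto
  interpret product_sigma_finite "\<lambda>_::real^'n. (lborel::real measure)" by standard

  have NN: "integral\<^sup>N lborel (F L f) = ennreal (L * integral cube (\<lambda>x. (f x)^2))"
    if cf: "continuous_on UNIV f" and L: "L \<ge> 0" for L f
  proof -
    have "(\<lambda>x. (f x)^2) integrable_on cube" unfolding cube_def
      by (intro integrable_continuous continuous_intros continuous_on_subset[OF cf]) auto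
    then have "((\<lambda>x. L * (f x)^2) has_integral (L * integral cube (\<lambda>x. (f x)^2))) cube"
      by (intro has_integral_mult_right integrable_integral)
    then show ?thesis unfolding F_def
      by (intro nn_integral_has_integral_lebesgue') (auto intro!: mult_nonneg_nonneg L)
  qed

  have mPhi: "\<Phi> \<in> measurable (PiM Basis (\<lambda>_. lborel)) borel"
    unfolding \<Phi>_def by measurable
  have mF: "F L f \<in> borel_measurable borel" if cf: "continuous_on UNIV f" for L f
  proof -
    have [measurable]: "f \<in> borel_measurable borel" by (rule borel_measurable_continuous_onI[OF cf])
    have [measurable]: "cube \<in> sets borel" unfolding cube_def by (simp add: borel_closed)
    show ?thesis unfolding F_def by measurable
  qed

  have transfer: "integral\<^sup>N lborel (F L f) = (\<integral>\<^sup>+\<omega>. (\<integral>\<^sup>+y. F L f (upd i (\<Phi> \<omega>) y) \<partial>lborel) \<partial>PiM I (\<lambda>_. lborel))"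
    if cf: "continuous_on UNIV f" for L f
  proof -
    have "integral\<^sup>N lborel (F L f) = integral\<^sup>N (distr (PiM Basis (\<lambda>_. lborel)) borel \<Phi>) (F L f)"
      unfolding \<Phi>_def by (subst lborel_eq[where 'a="real^'n"]) simp
    also have "\<dots> = (\<integral>\<^sup>+\<omega>. F L f (\<Phi> \<omega>) \<partial>PiM Basis (\<lambda>_. lborel))"
      by (rule nn_integral_distr[OF mPhi]) (simp add: mF[OF cf])
    also have "\<dots> = (\<integral>\<^sup>+\<omega>. F L f (\<Phi> \<omega>) \<partial>PiM (insert b0 I) (\<lambda>_. lborel))"
      by (simp add: bI)
    also have "\<dots> = (\<integral>\<^sup>+\<omega>. (\<integral>\<^sup>+y. F L f (\<Phi> (fun_upd \<omega> b0 y)) \<partial>lborel) \<partial>PiM I (\<lambda>_. lborel))"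
      by (rule product_nn_integral_insert[OF bI(3) bI(2)])
         (simp add: bI measurable_comp[OF mPhi mF[OF cf], unfolded comp_def])
    also have "\<dots> = (\<integral>\<^sup>+\<omega>. (\<integral>\<^sup>+y. F L f (upd i (\<Phi> \<omega>) y) \<partial>lborel) \<partial>PiM I (\<lambda>_. lborel))"
      unfolding \<Phi>_def b0_def Phi_upd ..
    finally show ?thesis .
  qed

  have sliceNN: "(\<integral>\<^sup>+y. F L f (upd i w y) \<partial>lborel) =
     (if (\<forall>j. j \<noteq> i \<longrightarrow> w$j \<in> {0..1}) then ennreal (L * integral {0..1} (\<lambda>t. (f (upd i w t))^2)) else 0)"
    if cf: "continuous_on UNIV f" and L: "L \<ge> 0" for L f w
  proof (cases "\<forall>j. j \<noteq> i \<longrightarrow> w$j \<in> {0..1}")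
    case True
    then have ind: "indicator cube (upd i w y) = (indicator {0..1} y :: ennreal)" for y
      unfolding cube_def by (auto simp: indicator_def mem_box_cart upd_nth)
    have "(\<lambda>t. (f (upd i w t))^2) integrable_on {0..1}"
      by (intro integrable_continuous_real continuous_intros continuous_on_compose2[OF cf cont_upd]) auto
    then have "((\<lambda>t. L * (f (upd i w t))^2) has_integral (L * integral {0..1} (\<lambda>t. (f (upd i w t))^2))) {0..1}"
      by (intro has_integral_mult_right integrable_integral)
    then have "(\<integral>\<^sup>+y. ennreal (L * (f (upd i w y))^2) * indicator {0..1} y \<partial>lborel) = ennreal (L * integral {0..1} (\<lambda>t. (f (upd i w t))^2))"
      by (intro nn_integral_has_integral_lebesgue') (auto intro!: mult_nonneg_nonneg L)
    then show ?thesis using True unfolding F_def ind by simp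
  next
    case False
    then have ind: "indicator cube (upd i w y) = (0 :: ennreal)" for y
      unfolding cube_def by (auto simp: indicator_def mem_box_cart upd_nth)
    have z: "(\<integral>\<^sup>+y. F L f (upd i w y) \<partial>lborel) = 0" unfolding F_def ind by simp
    show ?thesis unfolding z if_not_P[OF False] ..
  qed

  have "ennreal (1 * integral cube (\<lambda>x. (g x)^2)) = (\<integral>\<^sup>+\<omega>. (\<integral>\<^sup>+y. F 1 g (upd i (\<Phi> \<omega>) y) \<partial>lborel) \<partial>PiM I (\<lambda>_. lborel))"
    using NN[OF cg, of 1] transfer[OF cg, of 1] by simp
  also have "\<dots> \<le> (\<integral>\<^sup>+\<omega>. (\<integral>\<^sup>+y. F K h (upd i (\<Phi> \<omega>) y) \<partial>lborel) \<partial>PiM I (\<lambda>_. lborel))"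
  proof (rule nn_integral_mono)
    fix \<omega> :: "real^'n \<Rightarrow> real"
    have e1: "(\<integral>\<^sup>+y. F 1 g (upd i (\<Phi> \<omega>) y) \<partial>lborel) = (if (\<forall>j. j \<noteq> i \<longrightarrow> (\<Phi> \<omega>)$j \<in> {0..1}) then ennreal (1 * integral {0..1} (\<lambda>t. (g (upd i (\<Phi> \<omega>) t))^2)) else 0)"
      by (rule sliceNN[OF cg zero_le_one])
    have e2: "(\<integral>\<^sup>+y. F K h (upd i (\<Phi> \<omega>) y) \<partial>lborel) = (if (\<forall>j. j \<noteq> i \<longrightarrow> (\<Phi> \<omega>)$j \<in> {0..1}) then ennreal (K * integral {0..1} (\<lambda>t. (h (upd i (\<Phi> \<omega>) t))^2)) else 0)"
      by (rule sliceNN[OF ch K])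
    show "(\<integral>\<^sup>+y. F 1 g (upd i (\<Phi> \<omega>) y) \<partial>lborel) \<le> (\<integral>\<^sup>+y. F K h (upd i (\<Phi> \<omega>) y) \<partial>lborel)"
      unfolding e1 e2 using slice[of "\<Phi> \<omega>"] by (auto intro: ennreal_leI)
  qed
  also have "\<dots> = ennreal (K * integral cube (\<lambda>x. (h x)^2))"
    using NN[OF ch K] transfer[OF ch, of K] by simp
  finally have le: "ennreal (integral cube (\<lambda>x. (g x)^2)) \<le> ennreal (K * integral cube (\<lambda>x. (h x)^2))"
    by simp
  have "(\<lambda>x. (h x)^2) integrable_on cube" unfolding cube_def
    by (intro integrable_continuous continuous_intros continuous_on_subset[OF ch]) auto
  then have "integral cube (\<lambda>x. (h x)^2) \<ge> 0" by (rule integral_nonneg) auto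
  then have "K * integral cube (\<lambda>x. (h x)^2) \<ge> 0" using K by simp
  then show ?thesis using le unfolding cube_def by (simp add: ennreal_le_iff)
qed

lemma int_sq_nonneg: "integral S (\<lambda>x. (f x)^2) \<ge> (0::real)"
  by (cases "(\<lambda>x. (f x)^2) integrable_on S")
     (auto intro: integral_nonneg simp: not_integrable_integral)

lemma L2_01_sq: "(L2_01 q)^2 = integral {0..1} (\<lambda>x. (poly q x)^2)"
  unfolding L2_01_def using int_sq_nonneg by simp

theorem lemmaA1:
  fixes p :: nat and v :: "real^'n::finite \<Rightarrow> real" and i :: 'n
  assumes "v \<in> Poly_tot p"
  shows "L2_Q (partial i v) \<le> C_p1 p * L2_Q v"
proof -
  obtain c where vc: "v = (\<lambda>x. \<Sum>\<alpha>\<in>multi_idx p. c \<alpha> * (\<Prod>j\<in>UNIV. (x $ j) ^ (\<alpha> j)))"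
    using assms unfolding Poly_tot_def by blast
  then have v: "v = mpoly p c" unfolding mpoly_def[abs_def] by simp
  define C where "C = C_p1 p"
  have C0: "C \<ge> 0" unfolding C_def by (rule C_p1_nonneg)
  have main: "integral (cbox 0 1) (\<lambda>x. (partial i (mpoly p c) x)^2) \<le> C^2 * integral (cbox 0 1) (\<lambda>x. (mpoly p c x)^2)"
  proof (rule fubini_ineq[where i=i])
    show "continuous_on UNIV (partial i (mpoly p c))" by (rule cont_partial)
    show "continuous_on UNIV (mpoly p c)" by (rule cont_mpoly)
    show "C^2 \<ge> 0" by simp
    fix x
    define q where "q = sl p c i x"
    have e1: "partial i (mpoly p c) (upd i x t) = poly (pderiv q) t" for t
      unfolding partial_mpoly q_def sl_upd by (simp add: upd_nth)
    have e2: "mpoly p c (upd i x t) = poly q t" for t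
      unfolding q_def sl_poly ..
    have "L2_01 (pderiv q) \<le> C * L2_01 q" unfolding C_def q_def by (rule C_p1_bound[OF sl_degree])
    then have "(L2_01 (pderiv q))^2 \<le> (C * L2_01 q)^2"
      using L2_01_nonneg by (intro power_mono) auto
    then show "integral {0..1} (\<lambda>t. (partial i (mpoly p c) (upd i x t))^2) \<le> C^2 * integral {0..1} (\<lambda>t. (mpoly p c (upd i x t))^2)"
      unfolding e1 e2 by (simp add: L2_01_sq power_mult_distrib)
  qed
  have "L2_Q (partial i v) \<le> sqrt (C^2 * integral (cbox 0 1) (\<lambda>x. (v x)^2))"
    unfolding L2_Q_def v using main by simp
  also have "\<dots> = C * L2_Q v"
    unfolding L2_Q_def using C0 by (simp add: real_sqrt_mult)
  finally show ?thesis unfolding C_def .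
qed

end
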